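(* For each integer $k\ge2$ there exists a constant $C_k>0$ such that the following holds. Let $(b_j)_{j\ge1}$ be any increasing sequence of positive numbers with $\sum_{j\ge1}1/b_j<+\infty$, let $f(z)=\prod_{j=1}^\infty(1+z/b_j)$, and let $F(s)=\ln f(e^s)=\sum_{j=1}^\infty\ln(1+e^s/b_j)$, $s\in\mathbb{R}$. Then $$|F^{(k)}(s)|\le C_k\,F''(s)\quad\text{for every } s\in\mathbb{R}.$$
   Context: $F^{(k)}$ denotes the $k$-th derivative of the real function $F$. *)

theory Defs
  imports "HOL-Analysis.Analysis"
begin

text \<open>F(s) = ln f(e^s) = sum over j of ln(1 + e^s / b_j), the sequence b indexed from 0.\<close>
definition logF :: "(nat \<Rightarrow> real) \<Rightarrow> real \<Rightarrow> real" where
  "logF b s = (\<Sum>j. ln (1 + exp s / b j))"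

end

theory Submission
  imports Defs "HOL-Computational_Algebra.Polynomial"
begin

definition sig :: "real \<Rightarrow> real" where "sig t = exp t / (1 + exp t)"

lemma sig_pos: "0 < sig t" unfolding sig_def by (simp add: add_pos_pos)
lemma sig_lt1: "sig t < 1" unfolding sig_def by (simp add: add_pos_pos)
lemma sig_le_exp: "sig t \<le> exp t"
  unfolding sig_def by (simp add: divide_le_eq add_pos_pos)

lemma sig_deriv: "(sig has_real_derivative sig t * (1 - sig t)) (at t)"
proof -
  have "((\<lambda>t. exp t / (1 + exp t)) has_real_derivative
     (exp t * (1 + exp t) - exp t * exp t) / ((1 + exp t) * (1 + exp t))) (at t)"
    by (auto intro!: derivative_eq_intros simp: add_pos_pos)
       (metis add_pos_pos exp_gt_zero zero_less_one less_irrefl)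
  moreover have "(exp t * (1 + exp t) - exp t * exp t) / ((1 + exp t) * (1 + exp t))
      = sig t * (1 - sig t)"
  proof -
    have h: "1 + exp t \<noteq> 0" by (metis add_pos_pos exp_gt_zero zero_less_one less_irrefl)
    show ?thesis unfolding sig_def using h by (simp add: field_simps)
  qed
  ultimately show ?thesis unfolding sig_def[abs_def] by simp
qed

fun lsP :: "nat \<Rightarrow> real poly" where
  "lsP 0 = 0"
| "lsP (Suc 0) = [:0,1:]"
| "lsP (Suc (Suc m)) = pderiv (lsP (Suc m)) * [:0,1,-1:]"

fun hfun :: "nat \<Rightarrow> real \<Rightarrow> real" where
  "hfun 0 t = ln (1 + exp t)"
| "hfun (Suc m) t = poly (lsP (Suc m)) (sig t)"

lemma hfun_deriv: "(hfun m has_real_derivative hfun (Suc m) t) (at t)"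
proof (cases m)
  case 0
  have "((\<lambda>t. ln (1 + exp t)) has_real_derivative exp t / (1 + exp t)) (at t)"
    by (auto intro!: derivative_eq_intros simp: add_pos_pos)
  then show ?thesis using 0 by (simp add: sig_def[abs_def] hfun.simps(1)[abs_def])
next
  case (Suc j)
  have "((\<lambda>t. poly (lsP (Suc j)) (sig t)) has_real_derivative
        poly (pderiv (lsP (Suc j))) (sig t) * (sig t * (1 - sig t))) (at t)"
    by (rule DERIV_chain2[OF poly_DERIV sig_deriv])
  moreover have "poly (pderiv (lsP (Suc j))) (sig t) * (sig t * (1 - sig t))
       = hfun (Suc (Suc j)) t"
    by (simp add: algebra_simps power2_eq_square)
  ultimately show ?thesis using Suc by (simp add: hfun.simps(2)[abs_def])
qed

lemma poly_bounded01: "\<exists>B\<ge>0. \<forall>x\<in>{0..1}. \<bar>poly p x\<bar> \<le> (B::real)"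
proof -
  have "compact (poly p ` {0..1::real})"
    by (rule compact_continuous_image) (auto intro: continuous_intros)
  then obtain B where "B > 0" "\<forall>y\<in>poly p ` {0..1}. norm y \<le> B"
    using compact_imp_bounded bounded_pos by metis
  then show ?thesis by (intro exI[of _ B]) auto
qed

lemma hfun2: "hfun 2 t = sig t * (1 - sig t)"
  by (simp add: numeral_2_eq_2 algebra_simps power2_eq_square pderiv_pCons)

lemma hfun2_nonneg: "hfun 2 t \<ge> 0"
  unfolding hfun2 using sig_pos[of t] sig_lt1[of t] by simp

lemma hbound2: assumes "m \<ge> 2" shows "\<exists>K\<ge>0. \<forall>t. \<bar>hfun m t\<bar> \<le> K * hfun 2 t"
proof -
  obtain j where m: "m = Suc (Suc j)" using assms by (metis add_2_eq_Suc le_Suc_ex)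
  obtain B where B: "B \<ge> 0" "\<forall>x\<in>{0..1}. \<bar>poly (pderiv (lsP (Suc j))) x\<bar> \<le> B"
    using poly_bounded01 by blast
  have "\<bar>hfun m t\<bar> \<le> B * hfun 2 t" for t
  proof -
    have s: "sig t \<in> {0..1}" using sig_pos[of t] sig_lt1[of t] by auto
    have "hfun m t = poly (pderiv (lsP (Suc j))) (sig t) * hfun 2 t"
      unfolding hfun2 m by (simp add: algebra_simps power2_eq_square)
    then have "\<bar>hfun m t\<bar> = \<bar>poly (pderiv (lsP (Suc j))) (sig t)\<bar> * hfun 2 t"
      using hfun2_nonneg[of t] by (simp add: abs_mult)
    also have "\<dots> \<le> B * hfun 2 t"
      using B s hfun2_nonneg[of t] by (intro mult_right_mono) auto
    finally show ?thesis .
  qed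
  with B show ?thesis by blast
qed

lemma hbound1: assumes "m \<ge> 1" shows "\<exists>K\<ge>0. \<forall>t. \<bar>hfun m t\<bar> \<le> K * exp t"
proof (cases "m = 1")
  case True
  have "\<bar>hfun m t\<bar> \<le> 1 * exp t" for t
    using True sig_pos[of t] sig_le_exp[of t] by simp
  then show ?thesis by (intro exI[of _ 1]) auto
next
  case False
  then obtain K where K: "K \<ge> 0" "\<forall>t. \<bar>hfun m t\<bar> \<le> K * hfun 2 t"
    using hbound2[of m] assms by auto
  have "\<bar>hfun m t\<bar> \<le> K * exp t" for t
  proof -
    have "hfun 2 t \<le> exp t" unfolding hfun2
      using sig_pos[of t] sig_lt1[of t] sig_le_exp[of t]
      by (smt (verit) mult_left_le)
    then show ?thesis using K by (meson dual_order.trans mult_left_mono)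
  qed
  with K show ?thesis by blast
qed

lemma hbound: "\<exists>K\<ge>0. \<forall>t. \<bar>hfun m t\<bar> \<le> K * exp t"
proof (cases m)
  case 0
  have "\<bar>hfun m t\<bar> \<le> 1 * exp t" for t
  proof -
    have "0 \<le> ln (1 + exp t)" by simp
    moreover have "ln (1 + exp t) \<le> exp t" by (rule ln_add_one_self_le_self) simp
    ultimately show ?thesis using 0 by simp
  qed
  then show ?thesis by (intro exI[of _ 1]) auto
next
  case (Suc n) then have "m \<ge> 1" by simp
  then show ?thesis by (rule hbound1)
qed

definition GG :: "(nat \<Rightarrow> real) \<Rightarrow> nat \<Rightarrow> real \<Rightarrow> real" where
  "GG b m s = (\<Sum>j. hfun m (s - ln (b j)))"

lemma exp_shift: "(b::real) > 0 \<Longrightarrow> exp (s - ln b) = exp s / b"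
proof -
  assume b: "b > 0"
  have "exp (s - ln b) = exp s / exp (ln b)" by (rule exp_diff)
  also have "exp (ln b) = b" using b by (rule exp_ln)
  finally show ?thesis .
qed

lemma GG_summable_abs:
  assumes pos: "\<forall>j. b j > 0" and sm: "summable (\<lambda>j. 1 / b j)"
  shows "summable (\<lambda>j. \<bar>hfun m (s - ln (b j))\<bar>)"
proof -
  obtain K where K: "K \<ge> 0" "\<forall>t. \<bar>hfun m t\<bar> \<le> K * exp t" using hbound by blast
  show ?thesis
  proof (rule summable_comparison_test[where g = "\<lambda>j. (K * exp s) * (1 / b j)"])
    show "\<exists>N. \<forall>n\<ge>N. norm \<bar>hfun m (s - ln (b n))\<bar> \<le> K * exp s * (1 / b n)"
    proof (intro exI[of _ 0] allI impI)
      fix n :: nat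
      have e: "exp (s - ln (b n)) = exp s * (1 / b n)"
        using exp_shift[of "b n" s] pos by simp
      have "norm \<bar>hfun m (s - ln (b n))\<bar> \<le> K * exp (s - ln (b n))"
        using K(2) by simp
      then show "norm \<bar>hfun m (s - ln (b n))\<bar> \<le> K * exp s * (1 / b n)"
        by (simp only: e mult.assoc)
    qed
    show "summable (\<lambda>j. K * exp s * (1 / b j))" using sm by (rule summable_mult)
  qed
qed

lemma GG_summable:
  assumes pos: "\<forall>j. b j > 0" and sm: "summable (\<lambda>j. 1 / b j)"
  shows "summable (\<lambda>j. hfun m (s - ln (b j)))"
  by (rule summable_rabs_cancel[OF GG_summable_abs[OF assms]])

lemma GG_deriv:
  assumes pos: "\<forall>j. b j > 0" and sm: "summable (\<lambda>j. 1 / b j)"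
  shows "(GG b m has_real_derivative GG b (Suc m) s) (at s)"
proof -
  obtain K where K: "K \<ge> 0" "\<forall>t. \<bar>hfun (Suc m) t\<bar> \<le> K * exp t" using hbound by blast
  let ?S = "{..<s+1}"
  have unif: "uniform_limit ?S (\<lambda>n x. \<Sum>i<n. hfun (Suc m) (x - ln (b i)))
      (\<lambda>x. \<Sum>i. hfun (Suc m) (x - ln (b i))) sequentially"
  proof (rule Weierstrass_m_test)
    fix n x assume "x \<in> ?S"
    then have ex: "exp x \<le> exp (s+1)" by simp
    have e: "exp (x - ln (b n)) = exp x * (1 / b n)"
      using exp_shift[of "b n" x] pos by simp
    have "norm (hfun (Suc m) (x - ln (b n))) \<le> K * exp (x - ln (b n))"
      using K(2) by (simp only: real_norm_def)
    also have "\<dots> = K * (exp x * (1 / b n))" by (simp only: e)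
    also have "\<dots> \<le> K * (exp (s+1) * (1 / b n))"
      using K(1) pos ex by (intro mult_left_mono mult_right_mono) (auto simp: less_imp_le)
    finally show "norm (hfun (Suc m) (x - ln (b n))) \<le> K * exp (s+1) * (1 / b n)"
      by (simp only: mult.assoc)
  next
    show "summable (\<lambda>n. K * exp (s+1) * (1 / b n))" using sm by (rule summable_mult)
  qed
  have "\<exists>g. \<forall>x\<in>?S. (\<lambda>n. hfun m (x - ln (b n))) sums g x \<and>
     (g has_field_derivative (\<Sum>i. hfun (Suc m) (x - ln (b i)))) (at x within ?S)"
  proof (rule has_field_derivative_series[OF _ _ unif])
    show "convex ?S" by simp
    show "s \<in> ?S" by simp
    show "summable (\<lambda>n. hfun m (s - ln (b n)))" by (rule GG_summable[OF pos sm])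
    fix n x assume "x \<in> ?S"
    show "((\<lambda>x. hfun m (x - ln (b n))) has_field_derivative hfun (Suc m) (x - ln (b n)))
       (at x within ?S)"
    proof -
      have d1: "((\<lambda>x. x - ln (b n)) has_real_derivative 1) (at x)"
        by (auto intro!: derivative_eq_intros)
      have "((\<lambda>x. hfun m (x - ln (b n))) has_real_derivative hfun (Suc m) (x - ln (b n)) * 1) (at x)"
        by (rule DERIV_chain2[OF hfun_deriv d1])
      then show ?thesis by (simp add: has_field_derivative_at_within)
    qed
  qed
  then obtain g where g: "\<forall>x\<in>?S. (\<lambda>n. hfun m (x - ln (b n))) sums g x \<and>
     (g has_field_derivative (\<Sum>i. hfun (Suc m) (x - ln (b i)))) (at x within ?S)" by blast
  have dg: "(g has_real_derivative GG b (Suc m) s) (at s)"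
    using g[rule_format, of s] at_within_open[of s ?S] unfolding GG_def by simp
  have eqg: "g z = GG b m z" if "z \<in> ?S" for z
  proof -
    have "(\<lambda>n. hfun m (z - ln (b n))) sums g z" using g that by blast
    then show ?thesis unfolding GG_def by (simp add: sums_iff)
  qed
  have sS: "s \<in> ?S" by simp
  show ?thesis
    by (rule has_field_derivative_transform_within_open[OF dg open_lessThan sS eqg])
qed

lemma iter_deriv:
  assumes pos: "\<forall>j. b j > 0" and sm: "summable (\<lambda>j. 1 / b j)"
  shows "(deriv ^^ m) (logF b) = GG b m"
proof (induction m)
  case 0
  show ?case
    by (auto simp: fun_eq_iff logF_def GG_def exp_shift pos)
next
  case (Suc m)
  have "(deriv ^^ Suc m) (logF b) = deriv (GG b m)" using Suc by simp
  also have "\<dots> = GG b (Suc m)"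
    by (rule ext, rule DERIV_imp_deriv, rule GG_deriv[OF pos sm])
  finally show ?case .
qed

theorem lemma4p5:
  fixes k :: nat
  assumes "k \<ge> 2"
  shows "\<exists>C>0. \<forall>b :: nat \<Rightarrow> real.
           (\<forall>j. b j > 0) \<longrightarrow> mono b \<longrightarrow> summable (\<lambda>j. 1 / b j) \<longrightarrow>
           (\<forall>s::real. \<bar>(deriv ^^ k) (logF b) s\<bar> \<le> C * (deriv ^^ 2) (logF b) s)"
proof -
  obtain K where K: "K \<ge> 0" "\<forall>t. \<bar>hfun k t\<bar> \<le> K * hfun 2 t" using hbound2[OF assms] by blast
  define C where "C = K + 1"
  have C1: "C > 0" unfolding C_def using K(1) by simp
  have C2: "\<bar>hfun k t\<bar> \<le> C * hfun 2 t" for t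
  proof -
    have "K * hfun 2 t \<le> C * hfun 2 t"
      unfolding C_def by (rule mult_right_mono) (simp_all add: hfun2_nonneg)
    then show ?thesis using K(2) by (meson order_trans)
  qed
  show ?thesis
  proof (intro exI[of _ C] conjI allI impI)
    show "C > 0" by (rule C1)
    fix b :: "nat \<Rightarrow> real" and s :: real
    assume pos: "\<forall>j. b j > 0" and "mono b" and sm: "summable (\<lambda>j. 1 / b j)"
    have "\<bar>GG b k s\<bar> \<le> (\<Sum>j. \<bar>hfun k (s - ln (b j))\<bar>)"
      unfolding GG_def by (rule summable_rabs[OF GG_summable_abs[OF pos sm]])
    also have "\<dots> \<le> (\<Sum>j. C * hfun 2 (s - ln (b j)))"
    proof (rule suminf_le)
      show "\<And>n. \<bar>hfun k (s - ln (b n))\<bar> \<le> C * hfun 2 (s - ln (b n))" by (rule C2)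
      show "summable (\<lambda>j. \<bar>hfun k (s - ln (b j))\<bar>)" by (rule GG_summable_abs[OF pos sm])
      show "summable (\<lambda>j. C * hfun 2 (s - ln (b j)))"
        by (rule summable_mult[OF GG_summable[OF pos sm]])
    qed
    also have "\<dots> = C * GG b 2 s"
      unfolding GG_def by (rule suminf_mult[OF GG_summable[OF pos sm]])
    finally have fin: "\<bar>GG b k s\<bar> \<le> C * GG b 2 s" .
    have e1: "(deriv ^^ k) (logF b) = GG b k" by (rule iter_deriv[OF pos sm])
    have e2: "(deriv ^^ 2) (logF b) = GG b 2" by (rule iter_deriv[OF pos sm])
    show "\<bar>(deriv ^^ k) (logF b) s\<bar> \<le> C * (deriv ^^ 2) (logF b) s"
      unfolding e1 e2 by (rule fin)
  qed
qed

end
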